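(* Consider an instance of the robust flow design problem on a directed graph $D=(V,A)$ with source $s$, sink $t$, capacities $u\in\mathbb{R}_+^A$, protection cost coefficients $\gamma\in\mathbb{R}_+^A$, flow player budget $B_F>0$ and interdictor budget $B_I\ge0$. There exists an optimal solution $(x^*,c^* )$ such that for all $e\in A^*$, $$c^*_e=\begin{cases}\dfrac{B_F}{\Gamma(x^* )}&\text{if there exists }P\in\mathcal{P}\text{ with }e\in P\text{ and }x^*_P>0,\\[1ex] 0&\text{otherwise,}\end{cases}$$ where $\Gamma(x):=\sum_{P\in\mathcal{P}}\sum_{e\in P}\gamma_e x_P$.
   Context: $\mathcal{P}$ is the set of $s$-$t$-paths in $D$ and $X=\{x\in\mathbb{R}_+^{\mathcal{P}}:\sum_{P\ni e}x_P\le u_e\ \forall e\in A\}$. $A^*=\{e\in A:\gamma_e>0\}$. In the design problem the flow player chooses $x\in X$ and interdiction costs $c\in\mathbb{R}_+^A$ subject to $\sum_{e\in A}\gamma_e c_e\sum_{P\in\mathcal{P}:e\in P}x_P\le B_F$; for arcs with $\gamma_e=0$ one has $c_e=\infty$ (flow cannot be stolen there). The interdictor then chooses $z\in\mathbb{R}_+^{A\times\mathcal{P}}$ with $\sum_{e\in A}c_e\sum_{P\ni e}z_{e,P}\le B_I$ (and $z_{e,P}=0$ if $c_e=\infty$), and the value is $\mathrm{val}(x,z)=\sum_{P\in\mathcal{P}}(x_P-\sum_{e\in P}z_{e,P})^+$. An optimal solution is a feasible pair $(x,c)$ maximizing $\min_z\mathrm{val}(x,z)$. *)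

theory Defs
  imports Main "Graph_Theory.Digraph" "Graph_Theory.Arc_Walk"
begin

text \<open>Flow values x and interdiction costs c are total functions; only their values
on s-t paths, resp. on arcs of A*, are meaningful. For arcs outside A* the
cost is infinity, which is encoded by excluding those arcs from the budget sums
and forcing the interdiction z to vanish there.\<close>

definition st_paths :: "('a,'b) pre_digraph \<Rightarrow> 'a \<Rightarrow> 'a \<Rightarrow> 'b list set" where
  "st_paths G s t = {p. pre_digraph.apath G s p t}"

definition Astar :: "('a,'b) pre_digraph \<Rightarrow> ('b \<Rightarrow> real) \<Rightarrow> 'b set" where
  "Astar G \<gamma> = {e \<in> arcs G. \<gamma> e > 0}"

definition arc_load :: "('a,'b) pre_digraph \<Rightarrow> 'a \<Rightarrow> 'a \<Rightarrow> ('b list \<Rightarrow> real) \<Rightarrow> 'b \<Rightarrow> real" where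
  "arc_load G s t x e = (\<Sum>P\<in>{P \<in> st_paths G s t. e \<in> set P}. x P)"

definition flow_feasible ::
  "('a,'b) pre_digraph \<Rightarrow> 'a \<Rightarrow> 'a \<Rightarrow> ('b \<Rightarrow> real) \<Rightarrow> ('b list \<Rightarrow> real) \<Rightarrow> bool" where
  "flow_feasible G s t u x \<longleftrightarrow>
     (\<forall>P\<in>st_paths G s t. 0 \<le> x P) \<and> (\<forall>e\<in>arcs G. arc_load G s t x e \<le> u e)"

definition design_feasible ::
  "('a,'b) pre_digraph \<Rightarrow> 'a \<Rightarrow> 'a \<Rightarrow> ('b \<Rightarrow> real) \<Rightarrow> ('b \<Rightarrow> real) \<Rightarrow> real
    \<Rightarrow> ('b list \<Rightarrow> real) \<Rightarrow> ('b \<Rightarrow> real) \<Rightarrow> bool" where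
  "design_feasible G s t u \<gamma> BF x c \<longleftrightarrow>
     flow_feasible G s t u x \<and> (\<forall>e\<in>Astar G \<gamma>. 0 \<le> c e) \<and>
     (\<Sum>e\<in>Astar G \<gamma>. \<gamma> e * c e * arc_load G s t x e) \<le> BF"

definition interdiction_feasible ::
  "('a,'b) pre_digraph \<Rightarrow> 'a \<Rightarrow> 'a \<Rightarrow> ('b \<Rightarrow> real) \<Rightarrow> real \<Rightarrow> ('b \<Rightarrow> real)
    \<Rightarrow> ('b \<times> 'b list \<Rightarrow> real) \<Rightarrow> bool" where
  "interdiction_feasible G s t \<gamma> BI c z \<longleftrightarrow>
     (\<forall>e\<in>arcs G. \<forall>P\<in>st_paths G s t. 0 \<le> z (e, P)) \<and>
     (\<forall>e\<in>arcs G - Astar G \<gamma>. \<forall>P\<in>st_paths G s t. z (e, P) = 0) \<and>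
     (\<Sum>e\<in>Astar G \<gamma>. c e * (\<Sum>P\<in>{P \<in> st_paths G s t. e \<in> set P}. z (e, P))) \<le> BI"

definition flow_val ::
  "('a,'b) pre_digraph \<Rightarrow> 'a \<Rightarrow> 'a \<Rightarrow> ('b list \<Rightarrow> real) \<Rightarrow> ('b \<times> 'b list \<Rightarrow> real) \<Rightarrow> real" where
  "flow_val G s t x z = (\<Sum>P\<in>st_paths G s t. max 0 (x P - (\<Sum>e\<in>set P. z (e, P))))"

definition robust_val ::
  "('a,'b) pre_digraph \<Rightarrow> 'a \<Rightarrow> 'a \<Rightarrow> ('b \<Rightarrow> real) \<Rightarrow> real
    \<Rightarrow> ('b list \<Rightarrow> real) \<Rightarrow> ('b \<Rightarrow> real) \<Rightarrow> real" where
  "robust_val G s t \<gamma> BI x c =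
     (INF z\<in>{z. interdiction_feasible G s t \<gamma> BI c z}. flow_val G s t x z)"

definition design_optimal ::
  "('a,'b) pre_digraph \<Rightarrow> 'a \<Rightarrow> 'a \<Rightarrow> ('b \<Rightarrow> real) \<Rightarrow> ('b \<Rightarrow> real) \<Rightarrow> real \<Rightarrow> real
    \<Rightarrow> ('b list \<Rightarrow> real) \<Rightarrow> ('b \<Rightarrow> real) \<Rightarrow> bool" where
  "design_optimal G s t u \<gamma> BF BI x c \<longleftrightarrow>
     design_feasible G s t u \<gamma> BF x c \<and>
     (\<forall>x' c'. design_feasible G s t u \<gamma> BF x' c' \<longrightarrow>
        robust_val G s t \<gamma> BI x' c' \<le> robust_val G s t \<gamma> BI x c)"

definition Gamma :: "('a,'b) pre_digraph \<Rightarrow> 'a \<Rightarrow> 'a \<Rightarrow> ('b \<Rightarrow> real) \<Rightarrow> ('b list \<Rightarrow> real) \<Rightarrow> real" where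
  "Gamma G s t \<gamma> x = (\<Sum>P\<in>st_paths G s t. \<Sum>e\<in>set P. \<gamma> e * x P)"

end

theory Submission
  imports Defs "HOL-Analysis.Function_Topology"
begin

lemma st_paths_basic:
  assumes "fin_digraph G" "s \<noteq> t"
  shows "finite (st_paths G s t)"
    and "\<And>P. P \<in> st_paths G s t \<Longrightarrow> set P \<subseteq> arcs G"
    and "\<And>P. P \<in> st_paths G s t \<Longrightarrow> P \<noteq> []"
proof -
  show "finite (st_paths G s t)"
    unfolding st_paths_def using fin_digraph.apaths_finite[OF assms(1)] by blast
  fix P assume "P \<in> st_paths G s t"
  then have "pre_digraph.apath G s P t" by (simp add: st_paths_def)
  then have aw: "pre_digraph.awalk G s P t" by (simp add: pre_digraph.apath_def)
  then show "set P \<subseteq> arcs G" by (simp add: pre_digraph.awalk_def)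
  show "P \<noteq> []" using aw assms(2) by (auto simp: pre_digraph.awalk_def pre_digraph.cas.simps)
qed

locale rfd =
  fixes G :: "('a,'b) pre_digraph" and s t :: 'a and u \<gamma> :: "'b \<Rightarrow> real" and BF BI :: real
  assumes finS: "finite (st_paths G s t)" and finA: "finite (arcs G)"
    and subA: "\<And>P. P \<in> st_paths G s t \<Longrightarrow> set P \<subseteq> arcs G"
    and neP: "\<And>P. P \<in> st_paths G s t \<Longrightarrow> P \<noteq> []"
    and upos: "\<forall>e\<in>arcs G. 0 \<le> u e" and gpos: "\<forall>e\<in>arcs G. 0 \<le> \<gamma> e"
    and BFpos: "BF > 0" and BIpos: "BI \<ge> 0"
begin

abbreviation "S \<equiv> st_paths G s t"
abbreviation "Ast \<equiv> Astar G \<gamma>"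
definition "prot P \<longleftrightarrow> set P \<inter> Ast = {}"
definition "U \<equiv> {P\<in>S. \<not> prot P}"
definition "gP P = (\<Sum>e\<in>set P. \<gamma> e)"
definition "XP x = (\<Sum>P\<in>{P\<in>S. prot P}. x P)"
definition "XT x = (\<Sum>P\<in>S. x P)"
definition "Lf x = max (XP x) (XT x - BI / BF * Gamma G s t \<gamma> x)"
definition "cu x e = (if \<exists>P\<in>S. e \<in> set P \<and> x P > 0 then BF / Gamma G s t \<gamma> x else 0)"

lemma Ast_sub: "Ast \<subseteq> arcs G" by (auto simp: Astar_def)
lemma finAst: "finite Ast" using Ast_sub finA finite_subset by blast
lemma finU: "finite U" using finS by (simp add: U_def)

lemma gP_nonneg: "P \<in> S \<Longrightarrow> gP P \<ge> 0"
  unfolding gP_def using subA gpos by (intro sum_nonneg) auto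

lemma gP_Ast: "P \<in> S \<Longrightarrow> gP P = (\<Sum>e\<in>{e\<in>Ast. e\<in>set P}. \<gamma> e)"
  unfolding gP_def
proof (rule sum.mono_neutral_right)
  assume P: "P \<in> S"
  show "finite (set P)" by simp
  show "{e\<in>Ast. e\<in>set P} \<subseteq> set P" by auto
  show "\<forall>i\<in>set P - {e\<in>Ast. e\<in>set P}. \<gamma> i = 0"
    using subA[OF P] gpos by (force simp: Astar_def)
qed

lemma gP_prot: "P \<in> S \<Longrightarrow> prot P \<Longrightarrow> gP P = 0"
proof -
  assume "P \<in> S" "prot P"
  have E: "{e\<in>Ast. e\<in>set P} = {}" using \<open>prot P\<close> by (auto simp: prot_def)
  have "gP P = (\<Sum>e\<in>{e\<in>Ast. e\<in>set P}. \<gamma> e)" by (rule gP_Ast) fact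
  also have "\<dots> = 0" unfolding E by simp
  finally show ?thesis .
qed

lemma gP_U: "P \<in> U \<Longrightarrow> gP P > 0"
proof -
  assume "P \<in> U"
  then have P: "P \<in> S" and "set P \<inter> Ast \<noteq> {}" by (auto simp: U_def prot_def)
  then obtain e where e: "e \<in> set P" "e \<in> Ast" by auto
  have "\<gamma> e \<le> gP P" unfolding gP_def
    using e subA[OF P] gpos by (intro member_le_sum) auto
  moreover have "\<gamma> e > 0" using e by (simp add: Astar_def)
  ultimately show ?thesis by simp
qed

lemma Gamma_gP: "Gamma G s t \<gamma> x = (\<Sum>P\<in>S. gP P * x P)"
  unfolding Gamma_def gP_def by (simp add: sum_distrib_right)

lemma swapA: "(\<Sum>e\<in>Ast. \<Sum>P\<in>{P\<in>S. e\<in>set P}. f e P) = (\<Sum>P\<in>S. \<Sum>e\<in>{e\<in>Ast. e\<in>set P}. f e P)"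
  by (rule sum.swap_restrict[OF finAst finS])

lemma Gamma_load: "Gamma G s t \<gamma> x = (\<Sum>e\<in>Ast. \<gamma> e * arc_load G s t x e)"
proof -
  have "(\<Sum>e\<in>Ast. \<gamma> e * arc_load G s t x e) = (\<Sum>e\<in>Ast. \<Sum>P\<in>{P\<in>S. e\<in>set P}. \<gamma> e * x P)"
    by (simp add: arc_load_def sum_distrib_left)
  also have "\<dots> = (\<Sum>P\<in>S. \<Sum>e\<in>{e\<in>Ast. e\<in>set P}. \<gamma> e * x P)" by (rule swapA)
  also have "\<dots> = (\<Sum>P\<in>S. gP P * x P)"
    by (intro sum.cong refl) (simp add: gP_Ast sum_distrib_right)
  finally show ?thesis by (simp add: Gamma_gP)
qed

lemma split_sum: "finite A \<Longrightarrow> sum f A = sum f {x\<in>A. p x} + sum f {x\<in>A. \<not> p x}"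
  by (subst sum.union_disjoint[symmetric]) (auto intro: sum.cong)

lemma XT_split: "XT x = XP x + (\<Sum>P\<in>U. x P)"
  unfolding XT_def XP_def U_def using split_sum[OF finS] by blast

lemma Gamma_nonneg: "\<forall>P\<in>S. 0 \<le> x P \<Longrightarrow> Gamma G s t \<gamma> x \<ge> 0"
  unfolding Gamma_gP by (intro sum_nonneg) (simp add: gP_nonneg)

lemma Gamma_zero: 
  assumes "\<forall>P\<in>S. 0 \<le> x P" "Gamma G s t \<gamma> x = 0" "P \<in> U"
  shows "x P = 0"
proof -
  have P: "P \<in> S" using assms(3) by (simp add: U_def)
  have "gP P * x P \<le> Gamma G s t \<gamma> x" unfolding Gamma_gP
    using assms(1) P finS by (intro member_le_sum) (auto simp: gP_nonneg)
  then have "gP P * x P \<le> 0" using assms(2) by simp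
  moreover have "gP P > 0" using gP_U[OF assms(3)] .
  ultimately show ?thesis using assms(1) P
    by (smt (verit) mult_pos_pos)
qed


lemma load_zero:
  assumes "\<forall>P\<in>S. 0 \<le> x P" "\<not> (\<exists>P\<in>S. e \<in> set P \<and> x P > 0)"
  shows "arc_load G s t x e = 0"
  unfolding arc_load_def using assms by (intro sum.neutral) force

lemma cu_feasible:
  assumes ff: "flow_feasible G s t u x"
  shows "design_feasible G s t u \<gamma> BF x (cu x)"
proof -
  have x0: "\<forall>P\<in>S. 0 \<le> x P" using ff by (simp add: flow_feasible_def)
  have G0: "Gamma G s t \<gamma> x \<ge> 0" using Gamma_nonneg[OF x0] .
  have c0: "\<forall>e\<in>Ast. 0 \<le> cu x e" using G0 BFpos by (simp add: cu_def)
  have "(\<Sum>e\<in>Ast. \<gamma> e * cu x e * arc_load G s t x e)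
      = (\<Sum>e\<in>Ast. BF / Gamma G s t \<gamma> x * (\<gamma> e * arc_load G s t x e))"
  proof (intro sum.cong refl)
    fix e assume "e \<in> Ast"
    show "\<gamma> e * cu x e * arc_load G s t x e = BF / Gamma G s t \<gamma> x * (\<gamma> e * arc_load G s t x e)"
    proof (cases "\<exists>P\<in>S. e \<in> set P \<and> x P > 0")
      case True then show ?thesis by (simp add: cu_def)
    next
      case False then show ?thesis using load_zero[OF x0 False] by (simp add: cu_def)
    qed
  qed
  also have "\<dots> = BF / Gamma G s t \<gamma> x * Gamma G s t \<gamma> x"
    by (simp add: Gamma_load sum_distrib_left)
  also have "\<dots> \<le> BF" using BFpos by (cases "Gamma G s t \<gamma> x = 0") auto
  finally show ?thesis using ff c0 by (simp add: design_feasible_def)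
qed

lemma Zs_Ast:
  assumes "interdiction_feasible G s t \<gamma> BI c z" "P \<in> S"
  shows "(\<Sum>e\<in>set P. z (e,P)) = (\<Sum>e\<in>{e\<in>Ast. e\<in>set P}. z (e,P))"
proof (rule sum.mono_neutral_right)
  show "finite (set P)" by simp
  show "{e\<in>Ast. e\<in>set P} \<subseteq> set P" by auto
  show "\<forall>i\<in>set P - {e\<in>Ast. e\<in>set P}. z (i,P) = 0"
    using subA[OF assms(2)] assms(1) assms(2) by (auto simp: interdiction_feasible_def)
qed

lemma Zs_nonneg:
  assumes "interdiction_feasible G s t \<gamma> BI c z" "P \<in> S"
  shows "(\<Sum>e\<in>set P. z (e,P)) \<ge> 0"
  using subA[OF assms(2)] assms by (intro sum_nonneg) (auto simp: interdiction_feasible_def)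

lemma flow_val_nonneg: "flow_val G s t x z \<ge> 0"
  unfolding flow_val_def by (intro sum_nonneg) simp

lemma lower:
  assumes ff: "flow_feasible G s t u x"
  shows "Lf x \<le> robust_val G s t \<gamma> BI x (cu x)"
  unfolding robust_val_def
proof (rule cInf_greatest)
  show "flow_val G s t x ` {z. interdiction_feasible G s t \<gamma> BI (cu x) z} \<noteq> {}"
    using BIpos by (auto simp: interdiction_feasible_def intro!: exI[of _ "\<lambda>_. 0"])
  have x0: "\<forall>P\<in>S. 0 \<le> x P" using ff by (simp add: flow_feasible_def)
  have G0: "Gamma G s t \<gamma> x \<ge> 0" using Gamma_nonneg[OF x0] .
  fix v assume "v \<in> flow_val G s t x ` {z. interdiction_feasible G s t \<gamma> BI (cu x) z}"
  then obtain z where zf: "interdiction_feasible G s t \<gamma> BI (cu x) z" and v: "v = flow_val G s t x z"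
    by auto
  define Zs where "Zs P = (\<Sum>e\<in>set P. z (e,P))" for P
  have fv: "flow_val G s t x z = (\<Sum>P\<in>S. max 0 (x P - Zs P))"
    by (simp add: flow_val_def Zs_def)
  have i: "XP x \<le> flow_val G s t x z"
  proof -
    have "XP x = (\<Sum>P\<in>{P\<in>S. prot P}. max 0 (x P - Zs P))"
      unfolding XP_def
    proof (intro sum.cong refl)
      fix P assume P: "P \<in> {P\<in>S. prot P}"
      have "Zs P = (\<Sum>e\<in>{e\<in>Ast. e\<in>set P}. z (e,P))" unfolding Zs_def using Zs_Ast[OF zf] P by blast
      also have "{e\<in>Ast. e\<in>set P} = {}" using P by (auto simp: prot_def)
      finally show "x P = max 0 (x P - Zs P)" using x0 P by simp
    qed
    also have "\<dots> \<le> (\<Sum>P\<in>S. max 0 (x P - Zs P))"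
      using finS by (intro sum_mono2) auto
    finally show ?thesis using fv by simp
  qed
  have ii: "XT x - BI / BF * Gamma G s t \<gamma> x \<le> flow_val G s t x z"
  proof (cases "Gamma G s t \<gamma> x = 0")
    case True
    have "(\<Sum>P\<in>U. x P) = 0" using Gamma_zero[OF x0 True] by simp
    then show ?thesis using i True XT_split[of x] by simp
  next
    case False
    then have Gp: "Gamma G s t \<gamma> x > 0" using G0 by simp
    define W where "W = {P\<in>S. x P > 0}"
    have WS: "W \<subseteq> S" by (auto simp: W_def)
    have finW: "finite W" using finS WS finite_subset by blast
    have XTW: "XT x = (\<Sum>P\<in>W. x P)"
    proof -
      have "XT x = (\<Sum>P\<in>W. x P) + (\<Sum>P\<in>{P\<in>S. \<not> x P > 0}. x P)"
        unfolding XT_def W_def by (rule split_sum[OF finS])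
      moreover have "(\<Sum>P\<in>{P\<in>S. \<not> x P > 0}. x P) = 0"
        using x0 by (intro sum.neutral) force
      ultimately show ?thesis by simp
    qed
    have "(\<Sum>P\<in>W. x P - Zs P) \<le> (\<Sum>P\<in>W. max 0 (x P - Zs P))"
      by (intro sum_mono) simp
    also have "\<dots> \<le> (\<Sum>P\<in>S. max 0 (x P - Zs P))"
      using finS WS by (intro sum_mono2) auto
    finally have fv2: "XT x - (\<Sum>P\<in>W. Zs P) \<le> flow_val G s t x z"
      using fv XTW by (simp add: sum_subtractf)
    have cost: "(\<Sum>e\<in>Ast. cu x e * (\<Sum>P\<in>{P\<in>S. e\<in>set P}. z (e, P))) \<le> BI"
      using zf by (simp add: interdiction_feasible_def)
    have "BF / Gamma G s t \<gamma> x * (\<Sum>P\<in>W. Zs P)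
       = (\<Sum>P\<in>W. \<Sum>e\<in>{e\<in>Ast. e\<in>set P}. cu x e * z (e,P))"
      unfolding sum_distrib_left
    proof (intro sum.cong refl)
      fix P assume P: "P \<in> W"
      then have PS: "P \<in> S" using WS by blast
      have "Zs P = (\<Sum>e\<in>{e\<in>Ast. e\<in>set P}. z (e,P))" unfolding Zs_def using Zs_Ast[OF zf PS] .
      moreover have "\<forall>e\<in>{e\<in>Ast. e\<in>set P}. cu x e = BF / Gamma G s t \<gamma> x"
        using P PS by (auto simp: cu_def W_def)
      ultimately show "BF / Gamma G s t \<gamma> x * Zs P = (\<Sum>e\<in>{e\<in>Ast. e\<in>set P}. cu x e * z (e,P))"
        by (simp add: sum_distrib_left)
    qed
    also have "\<dots> \<le> (\<Sum>P\<in>S. \<Sum>e\<in>{e\<in>Ast. e\<in>set P}. cu x e * z (e,P))"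
    proof (rule sum_mono2[OF finS WS])
      fix P assume "P \<in> S - W"
      then show "0 \<le> (\<Sum>e\<in>{e\<in>Ast. e\<in>set P}. cu x e * z (e,P))"
        using zf G0 BFpos Ast_sub
        by (intro sum_nonneg mult_nonneg_nonneg) (auto simp: cu_def interdiction_feasible_def)
    qed
    also have "\<dots> = (\<Sum>e\<in>Ast. \<Sum>P\<in>{P\<in>S. e\<in>set P}. cu x e * z (e,P))"
      by (rule swapA[symmetric])
    also have "\<dots> \<le> BI" using cost by (simp add: sum_distrib_left)
    finally have "BF / Gamma G s t \<gamma> x * (\<Sum>P\<in>W. Zs P) \<le> BI" .
    then have "(\<Sum>P\<in>W. Zs P) \<le> BI / BF * Gamma G s t \<gamma> x"
      using Gp BFpos by (simp add: field_simps)
    then show ?thesis using fv2 by simp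
  qed
  show "Lf x \<le> v" using i ii v by (simp add: Lf_def)
qed


lemma upper:
  assumes df: "design_feasible G s t u \<gamma> BF x c"
  shows "\<exists>x'. flow_feasible G s t u x' \<and> robust_val G s t \<gamma> BI x c \<le> Lf x'"
proof -
  have ff: "flow_feasible G s t u x" using df by (simp add: design_feasible_def)
  have x0: "\<forall>P\<in>S. 0 \<le> x P" using ff by (simp add: flow_feasible_def)
  have c0: "\<forall>e\<in>Ast. 0 \<le> c e" using df by (simp add: design_feasible_def)
  have bud: "(\<Sum>e\<in>Ast. \<gamma> e * c e * arc_load G s t x e) \<le> BF"
    using df by (simp add: design_feasible_def)
  have US: "U \<subseteq> S" by (auto simp: U_def)
  define T where "T P = {e\<in>Ast. e\<in>set P}" for P
  have finT: "finite (T P)" for P using finAst by (simp add: T_def)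
  have neT: "P \<in> U \<Longrightarrow> T P \<noteq> {}" for P by (auto simp: U_def prot_def T_def)
  define m where "m P = Min (c ` T P)" for P
  have m_in: "P \<in> U \<Longrightarrow> \<exists>e\<in>T P. c e = m P" for P
    unfolding m_def using Min_in[of "c ` T P"] finT neT by fastforce
  define ep where "ep P = (SOME e. e \<in> T P \<and> c e = m P)" for P
  have ep: "P \<in> U \<Longrightarrow> ep P \<in> T P \<and> c (ep P) = m P" for P
    unfolding ep_def using m_in[of P] by (metis (mono_tags, lifting) someI)
  have m_le: "P \<in> U \<Longrightarrow> e \<in> T P \<Longrightarrow> m P \<le> c e" for P e
    unfolding m_def using finT by (intro Min_le) auto
  have m0: "P \<in> U \<Longrightarrow> 0 \<le> m P" for P
    using ep[of P] c0 by (auto simp: T_def)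
  have K1: "(\<Sum>P\<in>U. m P * x P * gP P) \<le> BF"
  proof -
    have "(\<Sum>P\<in>U. m P * x P * gP P) = (\<Sum>P\<in>U. \<Sum>e\<in>T P. \<gamma> e * m P * x P)"
      using US by (intro sum.cong refl) (auto simp: gP_Ast T_def sum_distrib_left sum_distrib_right mult.commute mult.left_commute)
    also have "\<dots> \<le> (\<Sum>P\<in>U. \<Sum>e\<in>T P. \<gamma> e * c e * x P)"
    proof (intro sum_mono)
      fix P e assume P: "P \<in> U" and e: "e \<in> T P"
      have "0 \<le> \<gamma> e" using e Ast_sub gpos by (auto simp: T_def)
      moreover have "0 \<le> x P" using P US x0 by auto
      ultimately show "\<gamma> e * m P * x P \<le> \<gamma> e * c e * x P"
        using m_le[OF P e] by (intro mult_right_mono mult_left_mono) auto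
    qed
    also have "\<dots> \<le> (\<Sum>P\<in>S. \<Sum>e\<in>T P. \<gamma> e * c e * x P)"
    proof (rule sum_mono2[OF finS US])
      fix P assume "P \<in> S - U"
      then show "0 \<le> (\<Sum>e\<in>T P. \<gamma> e * c e * x P)"
        using x0 c0 gpos Ast_sub by (intro sum_nonneg) (auto simp: T_def)
    qed
    also have "\<dots> = (\<Sum>e\<in>Ast. \<Sum>P\<in>{P\<in>S. e\<in>set P}. \<gamma> e * c e * x P)"
      unfolding T_def by (rule swapA[symmetric])
    also have "\<dots> = (\<Sum>e\<in>Ast. \<gamma> e * c e * arc_load G s t x e)"
      by (simp add: arc_load_def sum_distrib_left)
    finally show ?thesis using bud by simp
  qed
  have K2: "robust_val G s t \<gamma> BI x c \<le> XP x + (\<Sum>P\<in>U. x P - y P)"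
    if y0: "\<forall>P\<in>U. 0 \<le> y P \<and> y P \<le> x P" and ycost: "(\<Sum>P\<in>U. m P * y P) \<le> BI" for y
  proof -
    define z where "z = (\<lambda>(e,Q). if Q \<in> U \<and> e = ep Q then y Q else 0)"
    have zs: "z (e,Q) = (if Q \<in> U \<and> e = ep Q then y Q else 0)" for e Q by (simp add: z_def)
    have inner: "Q \<in> S \<Longrightarrow> (\<Sum>e\<in>T Q. c e * z (e,Q)) = (if Q \<in> U then m Q * y Q else 0)" for Q
    proof (cases "Q \<in> U")
      case True
      have "(\<Sum>e\<in>T Q. c e * z (e,Q)) = (\<Sum>e\<in>T Q. if e = ep Q then c e * y Q else 0)"
        using True by (intro sum.cong refl) (simp add: zs)
      also have "\<dots> = c (ep Q) * y Q" using ep[OF True] finT by (simp add: sum.delta)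
      finally show ?thesis using ep[OF True] True by simp
    next
      case False then show ?thesis by (simp add: zs)
    qed
    have zf: "interdiction_feasible G s t \<gamma> BI c z"
    proof -
      have "(\<Sum>e\<in>Ast. c e * (\<Sum>P\<in>{P\<in>S. e\<in>set P}. z (e,P)))
          = (\<Sum>e\<in>Ast. \<Sum>P\<in>{P\<in>S. e\<in>set P}. c e * z (e,P))"
        by (simp add: sum_distrib_left)
      also have "\<dots> = (\<Sum>Q\<in>S. \<Sum>e\<in>T Q. c e * z (e,Q))" unfolding T_def by (rule swapA)
      also have "\<dots> = (\<Sum>Q\<in>S. if Q \<in> U then m Q * y Q else 0)"
        using inner by (intro sum.cong refl) auto
      also have "\<dots> = (\<Sum>Q\<in>U. m Q * y Q)"
        using sum.inter_filter[OF finS, of "\<lambda>Q. m Q * y Q" "\<lambda>Q. Q \<in> U"] US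
        by (simp add: Int_absorb1 Collect_conj_eq Int_commute)
      finally have "(\<Sum>e\<in>Ast. c e * (\<Sum>P\<in>{P\<in>S. e\<in>set P}. z (e,P))) \<le> BI" using ycost by simp
      moreover have "\<forall>e\<in>arcs G - Ast. \<forall>P\<in>S. z (e,P) = 0"
        using ep by (auto simp: zs T_def)
      moreover have "\<forall>e\<in>arcs G. \<forall>P\<in>S. 0 \<le> z (e,P)" using y0 by (simp add: zs)
      ultimately show ?thesis by (simp add: interdiction_feasible_def)
    qed
    have "robust_val G s t \<gamma> BI x c \<le> flow_val G s t x z"
      unfolding robust_val_def using zf flow_val_nonneg
      by (intro cInf_lower) (auto intro: bdd_belowI[of _ 0])
    also have "flow_val G s t x z = (\<Sum>Q\<in>S. if prot Q then x Q else x Q - y Q)"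
      unfolding flow_val_def
    proof (intro sum.cong refl)
      fix Q assume Q: "Q \<in> S"
      show "max 0 (x Q - (\<Sum>e\<in>set Q. z (e,Q))) = (if prot Q then x Q else x Q - y Q)"
      proof (cases "prot Q")
        case True
        then have "Q \<notin> U" by (simp add: U_def)
        then show ?thesis using True x0 Q by (simp add: zs)
      next
        case False
        then have QU: "Q \<in> U" using Q by (simp add: U_def)
        have "(\<Sum>e\<in>set Q. z (e,Q)) = (\<Sum>e\<in>set Q. if e = ep Q then y Q else 0)"
          using QU by (intro sum.cong refl) (simp add: zs)
        also have "\<dots> = y Q" using ep[OF QU] by (simp add: sum.delta T_def)
        finally show ?thesis using False y0 QU by simp
      qed
    qed
    also have "\<dots> = XP x + (\<Sum>P\<in>U. x P - y P)"
      unfolding XP_def U_def by (subst split_sum[OF finS, of _ prot]) (auto intro: sum.cong)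
    finally show ?thesis .
  qed
  have Lf1: "XT x' - BI / BF * Gamma G s t \<gamma> x' \<le> Lf x'" for x' by (simp add: Lf_def)
  have Lf2: "XP x' \<le> Lf x'" for x' by (simp add: Lf_def)
  show ?thesis
  proof (cases "BI = 0")
    case True
    have "robust_val G s t \<gamma> BI x c \<le> XP x + (\<Sum>P\<in>U. x P - 0)"
      using True US x0 by (intro K2) auto
    also have "\<dots> = XT x" by (simp add: XT_split)
    also have "\<dots> \<le> Lf x" using Lf1[of x] True by simp
    finally show ?thesis using ff by blast
  next
    case BIne: False
    then have BIp: "BI > 0" using BIpos by simp
    show ?thesis
    proof (cases "(\<Sum>P\<in>U. m P * x P) \<le> BI")
      case True
      have "robust_val G s t \<gamma> BI x c \<le> XP x + (\<Sum>P\<in>U. x P - x P)"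
        using True US x0 by (intro K2) auto
      also have "\<dots> \<le> Lf x" using Lf2[of x] by simp
      finally show ?thesis using ff by blast
    next
      case False
      then have big: "BI < (\<Sum>P\<in>U. m P * x P)" by simp
      define Cle where "Cle \<theta> = (\<Sum>P\<in>U. if m P \<le> \<theta> then m P * x P else 0)" for \<theta>
      define Clt where "Clt \<theta> = (\<Sum>P\<in>U. if m P < \<theta> then m P * x P else 0)" for \<theta>
      define T' where "T' = {\<theta> \<in> m ` U. BI \<le> Cle \<theta>}"
      have Une: "U \<noteq> {}" using big BIp by auto
      have finT': "finite T'" using finU by (simp add: T'_def)
      have "Max (m ` U) \<in> T'"
      proof -
        have "Cle (Max (m ` U)) = (\<Sum>P\<in>U. m P * x P)"
          unfolding Cle_def using finU by (intro sum.cong refl) auto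
        then show ?thesis using big Une finU by (simp add: T'_def)
      qed
      then have T'ne: "T' \<noteq> {}" by auto
      define \<tau> where "\<tau> = Min T'"
      have \<tau>T: "\<tau> \<in> T'" unfolding \<tau>_def using finT' T'ne by (rule Min_in)
      then have \<tau>U: "\<tau> \<in> m ` U" and BIle: "BI \<le> Cle \<tau>" by (auto simp: T'_def)
      have \<tau>0: "\<tau> \<ge> 0" using \<tau>U m0 by auto
      have \<tau>p: "\<tau> > 0"
      proof (rule ccontr)
        assume "\<not> \<tau> > 0"
        then have "\<tau> = 0" using \<tau>0 by simp
        moreover have "Cle 0 = 0" unfolding Cle_def
          using m0 by (intro sum.neutral) (auto dest: m0 simp: antisym)
        ultimately show False using BIle BIp by simp
      qed
      have Clt_le: "Clt \<tau> \<le> BI"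
      proof (rule ccontr)
        assume A: "\<not> Clt \<tau> \<le> BI"
        define V where "V = {P\<in>U. m P < \<tau>}"
        have finV: "finite V" using finU by (simp add: V_def)
        have Vne: "V \<noteq> {}"
        proof
          assume "V = {}"
          then have "Clt \<tau> = 0" unfolding Clt_def V_def by (intro sum.neutral) auto
          then show False using A BIpos by simp
        qed
        define \<theta> where "\<theta> = Max (m ` V)"
        have \<theta>in: "\<theta> \<in> m ` V" unfolding \<theta>_def using finV Vne by simp
        then have \<theta>lt: "\<theta> < \<tau>" and \<theta>U: "\<theta> \<in> m ` U" by (auto simp: V_def)
        have "Cle \<theta> = Clt \<tau>" unfolding Cle_def Clt_def
        proof (intro sum.cong refl)
          fix P assume P: "P \<in> U"
          have "m P \<le> \<theta> \<longleftrightarrow> m P < \<tau>"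
          proof
            assume "m P \<le> \<theta>" then show "m P < \<tau>" using \<theta>lt by simp
          next
            assume "m P < \<tau>" then have "P \<in> V" using P by (simp add: V_def)
            then show "m P \<le> \<theta>" unfolding \<theta>_def using finV by simp
          qed
          then show "(if m P \<le> \<theta> then m P * x P else 0) = (if m P < \<tau> then m P * x P else 0)" by simp
        qed
        then have "\<theta> \<in> T'" using A \<theta>U by (simp add: T'_def)
        then have "\<tau> \<le> \<theta>" unfolding \<tau>_def using finT' by simp
        then show False using \<theta>lt by simp
      qed
      define b where "b = (\<Sum>P\<in>U. if m P = \<tau> then x P else 0)"
      have b0: "b \<ge> 0" unfolding b_def using x0 US by (intro sum_nonneg) auto
      have Cle_eq: "Cle \<tau> = Clt \<tau> + \<tau> * b"
        unfolding Cle_def Clt_def b_def sum_distrib_left sum.distrib[symmetric]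
        by (intro sum.cong refl) auto
      define \<beta> where "\<beta> = (BI - Clt \<tau>) / (\<tau> * b)"
      have \<beta>0: "\<beta> \<ge> 0" unfolding \<beta>_def using Clt_le \<tau>0 b0 by simp
      have \<beta>1: "\<beta> \<le> 1"
      proof (cases "\<tau> * b = 0")
        case True then show ?thesis unfolding \<beta>_def True by simp
      next
        case False
        then have "\<tau> * b > 0" using \<tau>0 b0 by simp
        then show ?thesis unfolding \<beta>_def using BIle Cle_eq by simp
      qed
      have key: "BI - Clt \<tau> \<le> \<tau> * \<beta> * b"
      proof (cases "\<tau> * b = 0")
        case True
        have "\<tau> * \<beta> * b = \<beta> * (\<tau> * b)" by (simp add: ac_simps)
        then have "\<tau> * \<beta> * b = 0" using True by simp
        then show ?thesis using True BIle Cle_eq by linarith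
      next
        case False then show ?thesis by (simp add: \<beta>_def)
      qed
      define y where "y P = (if m P < \<tau> then x P else if m P = \<tau> then \<beta> * x P else 0)" for P
      have y0: "\<forall>P\<in>U. 0 \<le> y P \<and> y P \<le> x P"
      proof
        fix P assume "P \<in> U"
        then have "0 \<le> x P" using US x0 by auto
        then show "0 \<le> y P \<and> y P \<le> x P" using \<beta>0 \<beta>1 unfolding y_def
          by (auto intro: mult_left_le_one_le)
      qed
      have ycost: "(\<Sum>P\<in>U. m P * y P) \<le> BI"
      proof -
        have "(\<Sum>P\<in>U. m P * y P) = Clt \<tau> + \<beta> * \<tau> * b"
          unfolding Clt_def b_def sum_distrib_left sum.distrib[symmetric]
          by (intro sum.cong refl) (auto simp: y_def)
        also have "\<dots> \<le> BI"
        proof (cases "\<tau> * b = 0")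
          case True
          have "\<beta> * \<tau> * b = \<beta> * (\<tau> * b)" by (simp add: ac_simps)
          then have "\<beta> * \<tau> * b = 0" using True by simp
          then show ?thesis using True Clt_le by linarith
        next
          case False then show ?thesis by (simp add: \<beta>_def)
        qed
        finally show ?thesis .
      qed
      have R: "robust_val G s t \<gamma> BI x c \<le> XP x + (\<Sum>P\<in>U. x P - y P)"
        using K2[OF y0 ycost] .
      define x' where "x' P = (if P \<in> U \<and> m P < \<tau> then x P * m P / \<tau> else x P)" for P
      have x'le: "P \<in> S \<Longrightarrow> 0 \<le> x' P \<and> x' P \<le> x P" for P
      proof -
        assume P: "P \<in> S"
        then have xp: "0 \<le> x P" using x0 by auto
        show ?thesis
        proof (cases "P \<in> U \<and> m P < \<tau>")
          case True
          then have "m P / \<tau> \<le> 1" "0 \<le> m P / \<tau>" using \<tau>p m0 by auto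
          then have "x P * (m P / \<tau>) \<le> x P * 1" "0 \<le> x P * (m P / \<tau>)" using xp
            by (meson mult_left_mono, meson mult_nonneg_nonneg)
          then show ?thesis using True by (simp add: x'_def)
        next
          case False
          then have "x' P = x P" unfolding x'_def by (simp only: if_False)
          then show ?thesis using xp by simp
        qed
      qed
      have ff': "flow_feasible G s t u x'"
        unfolding flow_feasible_def
      proof (intro conjI ballI)
        fix P assume "P \<in> S" then show "0 \<le> x' P" using x'le by blast
      next
        fix e assume e: "e \<in> arcs G"
        have "arc_load G s t x' e \<le> arc_load G s t x e"
          unfolding arc_load_def using x'le by (intro sum_mono) auto
        also have "\<dots> \<le> u e" using ff e by (simp add: flow_feasible_def)
        finally show "arc_load G s t x' e \<le> u e" .
      qed
      have XP': "XP x' = XP x"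
        unfolding XP_def by (intro sum.cong refl) (auto simp: x'_def U_def)
      have Gam': "Gamma G s t \<gamma> x' \<le> BF / \<tau>"
      proof -
        have "Gamma G s t \<gamma> x' = (\<Sum>P\<in>{P\<in>S. prot P}. gP P * x' P) + (\<Sum>P\<in>U. gP P * x' P)"
          unfolding Gamma_gP U_def by (rule split_sum[OF finS])
        also have "(\<Sum>P\<in>{P\<in>S. prot P}. gP P * x' P) = 0"
          by (intro sum.neutral) (auto simp: gP_prot)
        also have "(\<Sum>P\<in>U. gP P * x' P) \<le> (\<Sum>P\<in>U. m P * x P * gP P / \<tau>)"
        proof (intro sum_mono)
          fix P assume P: "P \<in> U"
          then have PS: "P \<in> S" using US by auto
          have g: "gP P \<ge> 0" using gP_nonneg[OF PS] .
          have xp: "0 \<le> x P" using x0 PS by auto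
          have "x' P \<le> x P * m P / \<tau>"
          proof (cases "m P < \<tau>")
            case True then show ?thesis using P by (simp add: x'_def)
          next
            case False
            then have "1 \<le> m P / \<tau>" using \<tau>p by simp
            then have "x P * 1 \<le> x P * (m P / \<tau>)" using xp by (intro mult_left_mono) auto
            then show ?thesis by (simp add: x'_def)
          qed
          then have "gP P * x' P \<le> gP P * (x P * m P / \<tau>)" using g by (intro mult_left_mono)
          then show "gP P * x' P \<le> m P * x P * gP P / \<tau>" by (simp add: field_simps)
        qed
        also have "\<dots> = (\<Sum>P\<in>U. m P * x P * gP P) / \<tau>" by (simp add: sum_divide_distrib)
        also have "\<dots> \<le> BF / \<tau>" using K1 \<tau>p by (simp add: divide_right_mono)
        finally show ?thesis by simp
      qed
      have pw: "(\<Sum>P\<in>U. x P - y P - x' P) = - (Clt \<tau> / \<tau>) - \<beta> * b"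
      proof -
        have "(\<Sum>P\<in>U. x P - y P - x' P)
            = (\<Sum>P\<in>U. - ((if m P < \<tau> then m P * x P else 0) / \<tau>) - \<beta> * (if m P = \<tau> then x P else 0))"
          using \<tau>p by (intro sum.cong refl) (auto simp: x'_def y_def field_simps)
        also have "\<dots> = - (Clt \<tau> / \<tau>) - \<beta> * b"
          unfolding Clt_def b_def sum_subtractf sum_negf sum_divide_distrib sum_distrib_left by simp
        finally show ?thesis .
      qed
      have "robust_val G s t \<gamma> BI x c \<le> XT x' - BI / \<tau>"
      proof -
        have "XP x + (\<Sum>P\<in>U. x P - y P) = XT x' + (\<Sum>P\<in>U. x P - y P - x' P)"
          by (simp add: XT_split XP' sum_subtractf)
        also have "\<dots> \<le> XT x' - BI / \<tau>"
        proof -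
          have "BI / \<tau> - Clt \<tau> / \<tau> \<le> \<beta> * b"
            using key \<tau>p by (simp add: field_simps diff_divide_distrib[symmetric])
          then show ?thesis using pw by simp
        qed
        finally show ?thesis using R by simp
      qed
      also have "\<dots> \<le> XT x' - BI / BF * Gamma G s t \<gamma> x'"
      proof -
        have "BI / BF * Gamma G s t \<gamma> x' \<le> BI / BF * (BF / \<tau>)"
          using Gam' BIpos BFpos by (intro mult_left_mono) auto
        also have "\<dots> = BI / \<tau>" using BFpos by simp
        finally show ?thesis by simp
      qed
      also have "\<dots> \<le> Lf x'" by (rule Lf1)
      finally show ?thesis using ff' by blast
    qed
  qed
qed


abbreviation "Top \<equiv> product_topology (\<lambda>_. euclideanreal) S"

lemma cont_lin:
  assumes "A \<subseteq> S"
  shows "continuous_map Top euclideanreal (\<lambda>x. \<Sum>P\<in>A. a P * x P)"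
proof (rule continuous_map_sum)
  show "finite A" using assms finS finite_subset by blast
  fix P assume "P \<in> A"
  then have "P \<in> S" using assms by blast
  then have "continuous_map Top euclideanreal (\<lambda>x. x P)"
    using continuous_map_product_projection[of P S "\<lambda>_. euclideanreal"] by simp
  then show "continuous_map Top euclideanreal (\<lambda>x. a P * x P)"
    by (rule continuous_map_real_mult_left)
qed

lemma cont_Lf: "continuous_map Top euclideanreal Lf"
proof -
  have XP: "continuous_map Top euclideanreal XP"
    using cont_lin[of "{P\<in>S. prot P}" "\<lambda>_. 1"] by (simp add: XP_def[abs_def])
  have XT: "continuous_map Top euclideanreal XT"
    using cont_lin[of S "\<lambda>_. 1"] by (simp add: XT_def[abs_def])
  have Ga: "continuous_map Top euclideanreal (Gamma G s t \<gamma>)"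
    using cont_lin[of S gP] by (simp add: Gamma_gP[abs_def])
  show ?thesis unfolding Lf_def[abs_def]
    by (intro continuous_map_real_max continuous_map_diff continuous_map_real_mult_left XP XT Ga)
qed

lemma cont_load: "continuous_map Top euclideanreal (\<lambda>x. arc_load G s t x e)"
  using cont_lin[of "{P\<in>S. e\<in>set P}" "\<lambda>_. 1"] by (simp add: arc_load_def[abs_def])

lemma restrict_same:
  "flow_feasible G s t u (restrict x S) = flow_feasible G s t u x"
  "Lf (restrict x S) = Lf x"
proof -
  have al: "arc_load G s t (restrict x S) e = arc_load G s t x e" for e
    unfolding arc_load_def by (intro sum.cong refl) auto
  show "flow_feasible G s t u (restrict x S) = flow_feasible G s t u x"
    by (simp add: flow_feasible_def al)
  have "XP (restrict x S) = XP x" unfolding XP_def by (intro sum.cong refl) auto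
  moreover have "XT (restrict x S) = XT x" unfolding XT_def by (intro sum.cong refl) auto
  moreover have "Gamma G s t \<gamma> (restrict x S) = Gamma G s t \<gamma> x"
    unfolding Gamma_gP by (intro sum.cong refl) auto
  ultimately show "Lf (restrict x S) = Lf x" by (simp add: Lf_def)
qed

lemma exists_max:
  "\<exists>xs. flow_feasible G s t u xs \<and> (\<forall>x. flow_feasible G s t u x \<longrightarrow> Lf x \<le> Lf xs)"
proof -
  define M where "M = (\<Sum>e\<in>arcs G. u e)"
  define Box where "Box = PiE S (\<lambda>_. {0..M})"
  define C where "C e = {x \<in> topspace Top. arc_load G s t x e \<in> {..u e}}" for e
  define K where "K = Box \<inter> (\<Inter>e\<in>arcs G. C e)"
  have tops: "topspace Top = PiE S (\<lambda>_. UNIV)" by simp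
  have cBox: "compactin Top Box" unfolding Box_def
    by (subst compactin_PiE) simp
  have clBox: "closedin Top Box" unfolding Box_def
    by (subst closedin_product_topology) (simp add: closed_closedin[symmetric])
  have clC: "closedin Top (C e)" for e
    unfolding C_def by (rule closedin_continuous_map_preimage[OF cont_load]) (simp add: closed_closedin[symmetric])
  have KI: "K = \<Inter>(insert Box (C ` arcs G))" by (auto simp: K_def)
  have clK: "closedin Top K" unfolding KI using clBox clC by (intro closedin_Inter) auto
  have cK: "compactin Top K" by (rule closed_compactin[OF cBox _ clK]) (auto simp: K_def)
  have "compactin euclideanreal (Lf ` K)" by (rule image_compactin[OF cK cont_Lf])
  then have cLK: "compact (Lf ` K)" by simp
  have memK: "restrict x S \<in> K" if ff: "flow_feasible G s t u x" for x
  proof -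
    have x0: "\<forall>P\<in>S. 0 \<le> x P" and ld: "\<forall>e\<in>arcs G. arc_load G s t x e \<le> u e"
      using ff by (auto simp: flow_feasible_def)
    have "x P \<le> M" if P: "P \<in> S" for P
    proof -
      obtain e where e: "e \<in> set P" using neP[OF P] by (cases P) auto
      then have eA: "e \<in> arcs G" using subA[OF P] by auto
      have "x P \<le> arc_load G s t x e"
        unfolding arc_load_def using P e x0 finS by (intro member_le_sum) auto
      also have "\<dots> \<le> u e" using ld eA by auto
      also have "\<dots> \<le> M" unfolding M_def using eA upos finA by (intro member_le_sum) auto
      finally show ?thesis .
    qed
    then have "restrict x S \<in> Box" using x0 by (auto simp: Box_def)
    moreover have "restrict x S \<in> C e" if "e \<in> arcs G" for e
    proof -
      have "arc_load G s t (restrict x S) e = arc_load G s t x e"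
        unfolding arc_load_def by (intro sum.cong refl) auto
      then show ?thesis using ld that by (auto simp: C_def)
    qed
    ultimately show ?thesis by (auto simp: K_def)
  qed
  have Kff: "flow_feasible G s t u x" if "x \<in> K" for x
  proof -
    have "\<forall>P\<in>S. 0 \<le> x P" using that by (auto simp: K_def Box_def)
    moreover have "\<forall>e\<in>arcs G. arc_load G s t x e \<le> u e" using that by (auto simp: K_def C_def)
    ultimately show ?thesis by (simp add: flow_feasible_def)
  qed
  have ff0: "flow_feasible G s t u (\<lambda>_. 0)"
    using upos by (simp add: flow_feasible_def arc_load_def)
  have "Lf ` K \<noteq> {}" using memK[OF ff0] by blast
  from compact_attains_sup[OF cLK this] obtain v where v: "v \<in> Lf ` K" "\<forall>w\<in>Lf ` K. w \<le> v" by blast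
  then obtain xs where xs: "xs \<in> K" "v = Lf xs" by blast
  show ?thesis
  proof (intro exI conjI allI impI)
    show "flow_feasible G s t u xs" using Kff[OF xs(1)] .
    fix x assume "flow_feasible G s t u x"
    then have "restrict x S \<in> K" by (rule memK)
    then have "Lf (restrict x S) \<le> Lf xs" using v(2) xs(2) by auto
    then show "Lf x \<le> Lf xs" by (simp add: restrict_same)
  qed
qed

end

theorem lemma3:
  fixes G :: "('a,'b) pre_digraph" and s t :: 'a
    and u \<gamma> :: "'b \<Rightarrow> real" and BF BI :: real
  assumes "fin_digraph G" and "s \<in> verts G" and "t \<in> verts G" and "s \<noteq> t"
    and "\<forall>e\<in>arcs G. 0 \<le> u e" and "\<forall>e\<in>arcs G. 0 \<le> \<gamma> e"
    and "BF > 0" and "BI \<ge> 0"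
  shows "\<exists>x c. design_optimal G s t u \<gamma> BF BI x c \<and>
           (\<forall>e\<in>Astar G \<gamma>.
              c e = (if \<exists>P\<in>st_paths G s t. e \<in> set P \<and> x P > 0
                     then BF / Gamma G s t \<gamma> x else 0))"
proof -
  interpret R: rfd G s t u \<gamma> BF BI
    using st_paths_basic[OF assms(1) assms(4)] assms fin_digraph.finite_arcs[OF assms(1)]
    by unfold_locales auto
  obtain xs where xs: "flow_feasible G s t u xs"
    and mx: "\<forall>x. flow_feasible G s t u x \<longrightarrow> R.Lf x \<le> R.Lf xs"
    using R.exists_max by blast
  have "design_optimal G s t u \<gamma> BF BI xs (R.cu xs)"
    unfolding design_optimal_def
  proof (intro conjI allI impI)
    show "design_feasible G s t u \<gamma> BF xs (R.cu xs)" by (rule R.cu_feasible[OF xs])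
    fix x' c' assume "design_feasible G s t u \<gamma> BF x' c'"
    then obtain x'' where "flow_feasible G s t u x''" "robust_val G s t \<gamma> BI x' c' \<le> R.Lf x''"
      using R.upper by blast
    then show "robust_val G s t \<gamma> BI x' c' \<le> robust_val G s t \<gamma> BI xs (R.cu xs)"
      using mx R.lower[OF xs] by fastforce
  qed
  moreover have "\<forall>e\<in>Astar G \<gamma>. R.cu xs e = (if \<exists>P\<in>st_paths G s t. e \<in> set P \<and> xs P > 0
                     then BF / Gamma G s t \<gamma> xs else 0)" by (simp add: R.cu_def)
  ultimately show ?thesis by blast
qed

end
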